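(* Let $R,S$ be nonnegative integral vectors such that $\mathcal{A}(R,S)$ is a convex-class, and let $A\in\mathcal{A}(R,S)$. Let $I$ and $I'$ be the horizontal intervals of two different rows of $A$. Then at least one of the following holds: (i) $|I|=|I'|=1$; (ii) $I\subseteq I'$ or $I'\subseteq I$; (iii) $I'$ is a 1-shift of $I$. In particular, if $|I|=k$ and $|I'|\ge k+1$ for some $k\ge1$, then $I\subseteq I'$. The analogous statements hold for the vertical intervals of two different columns of $A$. Moreover, for every interchange applicable to a matrix in $\mathcal{A}(R,S)$, the two rows involved either both contain exactly one $1$ or have horizontal intervals forming a 1-shift pair, and likewise the two columns involved either both contain exactly one $1$ or have vertical intervals forming a 1-shift pair.
   Context: $\mathcal{A}(R,S)$ is the set of $(0,1)$-matrices with row sum vector $R$ and column sum vector $S$. A $(0,1)$-matrix is convex if in every row and column the 1's occur consecutively; $\mathcal{A}(R,S)$ is a convex-class if every matrix in it is convex. For $A=[a_{ij}]$, the horizontal interval of row $i$ is $\{j: a_{ij}=1\}$ and the vertical interval of column $j$ is $\{i: a_{ij}=1\}$. For intervals $I=\{k,k+1,\dots,l\}$ and $I'=\{k+1,\dots,l+1\}$ with $k<l$, $I'$ is called a 1-shift of $I$ and vice versa, and $I,I'$ is a 1-shift pair. An interchange replaces a $2\times2$ submatrix $\begin{bmatrix}1&0\\0&1\end{bmatrix}$ by $\begin{bmatrix}0&1\\1&0\end{bmatrix}$ or vice versa. *)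

theory Defs
  imports Main
begin

text \<open>An m x n (0,1)-matrix is represented as a function nat => nat => nat,
  with m = length R rows and n = length S columns (0-based indices),
  entries in {0,1} inside the bounds and 0 outside.\<close>

definition zero_one_matrix :: "nat \<Rightarrow> nat \<Rightarrow> (nat \<Rightarrow> nat \<Rightarrow> nat) \<Rightarrow> bool" where
  "zero_one_matrix m n A \<longleftrightarrow>
     (\<forall>i<m. \<forall>j<n. A i j = 0 \<or> A i j = 1) \<and>
     (\<forall>i j. \<not> (i < m \<and> j < n) \<longrightarrow> A i j = 0)"

definition classA :: "nat list \<Rightarrow> nat list \<Rightarrow> (nat \<Rightarrow> nat \<Rightarrow> nat) set" where
  "classA R S = {A. zero_one_matrix (length R) (length S) A \<and>
     (\<forall>i<length R. (\<Sum>j<length S. A i j) = R ! i) \<and>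
     (\<forall>j<length S. (\<Sum>i<length R. A i j) = S ! j)}"

definition convex_matrix :: "nat \<Rightarrow> nat \<Rightarrow> (nat \<Rightarrow> nat \<Rightarrow> nat) \<Rightarrow> bool" where
  "convex_matrix m n A \<longleftrightarrow>
     (\<forall>i<m. \<forall>j1 j2 j. j1 \<le> j \<and> j \<le> j2 \<and> j2 < n \<and> A i j1 = 1 \<and> A i j2 = 1 \<longrightarrow> A i j = 1) \<and>
     (\<forall>j<n. \<forall>i1 i2 i. i1 \<le> i \<and> i \<le> i2 \<and> i2 < m \<and> A i1 j = 1 \<and> A i2 j = 1 \<longrightarrow> A i j = 1)"

definition convex_class :: "nat list \<Rightarrow> nat list \<Rightarrow> bool" where
  "convex_class R S \<longleftrightarrow> (\<forall>A\<in>classA R S. convex_matrix (length R) (length S) A)"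

definition hint :: "nat \<Rightarrow> (nat \<Rightarrow> nat \<Rightarrow> nat) \<Rightarrow> nat \<Rightarrow> nat set" where
  "hint n A i = {j. j < n \<and> A i j = 1}"

definition vint :: "nat \<Rightarrow> (nat \<Rightarrow> nat \<Rightarrow> nat) \<Rightarrow> nat \<Rightarrow> nat set" where
  "vint m A j = {i. i < m \<and> A i j = 1}"

definition shift_pair :: "nat set \<Rightarrow> nat set \<Rightarrow> bool" where
  "shift_pair I J \<longleftrightarrow> (\<exists>k l. k < l \<and>
     ((I = {k..l} \<and> J = {k+1..l+1}) \<or> (J = {k..l} \<and> I = {k+1..l+1})))"

definition interchange_at :: "(nat \<Rightarrow> nat \<Rightarrow> nat) \<Rightarrow> nat \<Rightarrow> nat \<Rightarrow> nat \<Rightarrow> nat \<Rightarrow> bool" where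
  "interchange_at B i i' j j' \<longleftrightarrow>
     (B i j = 1 \<and> B i' j' = 1 \<and> B i j' = 0 \<and> B i' j = 0) \<or>
     (B i j = 0 \<and> B i' j' = 0 \<and> B i j' = 1 \<and> B i' j = 1)"

end

theory Submission
  imports Defs
begin


definition cvx :: "nat set \<Rightarrow> bool" where
  "cvx X \<longleftrightarrow> (\<forall>x y z. x \<in> X \<and> y \<in> X \<and> x \<le> z \<and> z \<le> y \<longrightarrow> z \<in> X)"

lemma cvx_interval:
  assumes "finite I" "I \<noteq> {}" "cvx I"
  shows "I = {Min I..Max I}"
proof
  show "I \<subseteq> {Min I..Max I}" using assms(1) by (auto intro: Min_le Max_ge)
  show "{Min I..Max I} \<subseteq> I"
  proof
    fix z assume "z \<in> {Min I..Max I}"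
    moreover have "Min I \<in> I" "Max I \<in> I" using assms(1,2) by (rule Min_in, rule Max_in)
    ultimately show "z \<in> I" using assms(3) unfolding cvx_def by (meson atLeastAtMost_iff)
  qed
qed

lemma core_aux:
  assumes fI: "finite I" and fJ: "finite J" and cI: "cvx I" and cJ: "cvx J"
  and H: "\<And>a d. a\<in>I \<Longrightarrow> a\<notin>J \<Longrightarrow> d\<in>J \<Longrightarrow> d\<notin>I \<Longrightarrow> cvx (I-{a}\<union>{d}) \<and> cvx (J-{d}\<union>{a})"
  and nIJ: "\<not> I\<subseteq>J" and nJI: "\<not> J\<subseteq>I" and le: "Min I \<le> Min J"
  shows "(card I = 1 \<and> card J = 1) \<or> shift_pair I J"
proof -
  have neI: "I\<noteq>{}" and neJ: "J\<noteq>{}" using nIJ nJI by auto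
  define a0 where "a0 = Min I"
  define b where "b = Max I"
  define c where "c = Min J"
  define d0 where "d0 = Max J"
  have I: "I = {a0..b}" using cvx_interval[OF fI neI cI] a0_def b_def by simp
  have J: "J = {c..d0}" using cvx_interval[OF fJ neJ cJ] c_def d0_def by simp
  have ab: "a0 \<le> b" using I neI by auto
  have cd: "c \<le> d0" using J neJ by auto
  have ac: "a0 < c"
  proof (rule ccontr)
    assume "\<not> a0 < c"
    hence "a0 = c" using le a0_def c_def by simp
    then show False using nIJ nJI I J by (cases "b \<le> d0") auto
  qed
  have bd: "b < d0"
  proof (rule ccontr)
    assume "\<not> b < d0"
    then show False using nJI I J ac by auto
  qed
  show ?thesis
  proof (cases "a0 < b")
    case True
    note ab' = True
    show ?thesis
    proof (cases "c < d0")
      case True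
      have h: "cvx (I-{a0}\<union>{d0}) \<and> cvx (J-{d0}\<union>{a0})" using H[of a0 d0] I J ab ac bd cd by auto
      have e1: "d0 = b + 1"
      proof (rule ccontr)
        assume "d0 \<noteq> b + 1"
        hence "b + 1 < d0" using bd by simp
        have m1: "a0+1 \<in> I-{a0}\<union>{d0}" using I ab' by auto
        have m2: "d0 \<in> I-{a0}\<union>{d0}" by simp
        have "b+1 \<in> I-{a0}\<union>{d0}"
          using conjunct1[OF h, unfolded cvx_def, rule_format, of "a0+1" d0 "b+1"] m1 m2 ab' \<open>b + 1 < d0\<close> by simp
        then show False using I \<open>b + 1 < d0\<close> by auto
      qed
      have e2: "c = a0 + 1"
      proof (rule ccontr)
        assume "c \<noteq> a0 + 1"
        hence "a0 + 1 < c" using ac by simp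
        have "a0 \<in> J-{d0}\<union>{a0}" by simp
        moreover have "d0 - 1 \<in> J-{d0}\<union>{a0}" using J True by auto
        moreover have "a0 \<le> c - 1" "c - 1 \<le> d0 - 1" using \<open>a0 + 1 < c\<close> True by auto
        ultimately have "c - 1 \<in> J-{d0}\<union>{a0}"
          using conjunct2[OF h, unfolded cvx_def, rule_format, of a0 "d0 - 1" "c - 1"] by blast
        then show False using J \<open>a0 + 1 < c\<close> by auto
      qed
      have "shift_pair I J" unfolding shift_pair_def using I J e1 e2 ab' by blast
      then show ?thesis by simp
    next
      case False
      hence "d0 = c" using cd by simp
      have h: "cvx (I-{b}\<union>{d0})" using H[of b d0] I J ab ac bd cd \<open>d0 = c\<close> by auto
      have "a0 \<in> I-{b}\<union>{d0}" using ab' I by auto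
      moreover have "d0 \<in> I-{b}\<union>{d0}" by simp
      ultimately have "b \<in> I-{b}\<union>{d0}" using h[unfolded cvx_def, rule_format, of a0 d0 b] ab' bd by simp
      then show ?thesis using bd by auto
    qed
  next
    case False
    hence "b = a0" using ab by simp
    show ?thesis
    proof (cases "c < d0")
      case True
      have h: "cvx (J-{c}\<union>{a0})" using H[of a0 c] I J ab ac bd cd \<open>b = a0\<close> by auto
      have "a0 \<in> J-{c}\<union>{a0}" by simp
      moreover have "d0 \<in> J-{c}\<union>{a0}" using J True by auto
      ultimately have "c \<in> J-{c}\<union>{a0}" using h[unfolded cvx_def, rule_format, of a0 d0 c] ac True by simp
      then show ?thesis using ac by auto
    next
      case False
      hence "d0 = c" using cd by simp
      then show ?thesis using I J \<open>b = a0\<close> by simp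
    qed
  qed
qed

lemma shift_pair_sym: "shift_pair I J \<Longrightarrow> shift_pair J I"
  unfolding shift_pair_def by blast

lemma core:
  assumes fI: "finite I" and fJ: "finite J" and cI: "cvx I" and cJ: "cvx J"
  and H: "\<And>a d. a\<in>I \<Longrightarrow> a\<notin>J \<Longrightarrow> d\<in>J \<Longrightarrow> d\<notin>I \<Longrightarrow> cvx (I-{a}\<union>{d}) \<and> cvx (J-{d}\<union>{a})"
  shows "(card I = 1 \<and> card J = 1) \<or> I \<subseteq> J \<or> J \<subseteq> I \<or> shift_pair I J"
proof (cases "I \<subseteq> J \<or> J \<subseteq> I")
  case True then show ?thesis by blast
next
  case False
  show ?thesis
  proof (cases "Min I \<le> Min J")
    case True
    then show ?thesis using core_aux[OF fI fJ cI cJ H] False by blast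
  next
    case F2: False
    have H': "\<And>a d. a\<in>J \<Longrightarrow> a\<notin>I \<Longrightarrow> d\<in>I \<Longrightarrow> d\<notin>J \<Longrightarrow> cvx (J-{a}\<union>{d}) \<and> cvx (I-{d}\<union>{a})"
      using H by blast
    have "(card J = 1 \<and> card I = 1) \<or> shift_pair J I"
      using core_aux[OF fJ fI cJ cI H'] False F2 by simp
    then show ?thesis using shift_pair_sym by blast
  qed
qed



definition sw :: "(nat \<Rightarrow> nat \<Rightarrow> nat) \<Rightarrow> nat \<Rightarrow> nat \<Rightarrow> nat \<Rightarrow> nat \<Rightarrow> nat \<Rightarrow> nat \<Rightarrow> nat" where
  "sw A r r' c c' = (\<lambda>x y. if (x=r \<and> y=c) \<or> (x=r' \<and> y=c') then 0
      else if (x=r \<and> y=c') \<or> (x=r' \<and> y=c) then 1 else A x y)"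

lemma sum_two:
  fixes f g :: "nat \<Rightarrow> nat"
  assumes "finite S" "c \<in> S" "c' \<in> S" "c \<noteq> c'" "f c + f c' = g c + g c'"
    "\<And>y. y \<in> S \<Longrightarrow> y \<noteq> c \<Longrightarrow> y \<noteq> c' \<Longrightarrow> f y = g y"
  shows "sum f S = sum g S"
proof -
  have "sum f S = f c + (f c' + sum f (S - {c} - {c'}))"
    using sum.remove[OF assms(1,2), of f] sum.remove[of "S-{c}" c' f] assms by auto
  moreover have "sum g S = g c + (g c' + sum g (S - {c} - {c'}))"
    using sum.remove[OF assms(1,2), of g] sum.remove[of "S-{c}" c' g] assms by auto
  moreover have "sum f (S - {c} - {c'}) = sum g (S - {c} - {c'})"
    using assms(6) by (intro sum.cong) auto
  ultimately show ?thesis using assms(5) by simp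
qed

lemma sw_classA:
  assumes A: "A \<in> classA R S" and r: "r < length R" "r' < length R" "r \<noteq> r'"
    and c: "c < length S" "c' < length S" "c \<noteq> c'"
    and v: "A r c = 1" "A r c' = 0" "A r' c = 0" "A r' c' = 1"
  shows "sw A r r' c c' \<in> classA R S"
proof -
  let ?B = "sw A r r' c c'"
  have zA: "zero_one_matrix (length R) (length S) A" using A unfolding classA_def by simp
  have z: "zero_one_matrix (length R) (length S) ?B"
    using zA r c unfolding zero_one_matrix_def sw_def by auto
  have rows: "(\<Sum>j<length S. ?B i j) = R ! i" if "i < length R" for i
  proof -
    have "(\<Sum>j<length S. ?B i j) = (\<Sum>j<length S. A i j)"
      by (rule sum_two[of _ c c']) (use c v r in \<open>auto simp: sw_def\<close>)
    then show ?thesis using A that unfolding classA_def by simp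
  qed
  have cols: "(\<Sum>i<length R. ?B i j) = S ! j" if "j < length S" for j
  proof -
    have "(\<Sum>i<length R. ?B i j) = (\<Sum>i<length R. A i j)"
      by (rule sum_two[of _ r r']) (use c v r in \<open>auto simp: sw_def\<close>)
    then show ?thesis using A that unfolding classA_def by simp
  qed
  show ?thesis unfolding classA_def using z rows cols by simp
qed

lemma cvx_hint:
  assumes "convex_matrix m n B" "i < m" shows "cvx (hint n B i)"
  unfolding cvx_def
proof (intro allI impI)
  fix x y z assume h: "x \<in> hint n B i \<and> y \<in> hint n B i \<and> x \<le> z \<and> z \<le> y"
  have hx: "x < n" "B i x = 1" "y < n" "B i y = 1" using h unfolding hint_def by auto
  have "B i z = 1"
    using conjunct1[OF assms(1)[unfolded convex_matrix_def], rule_format, OF assms(2), of x z y] h hx by blast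
  then show "z \<in> hint n B i" using h hx unfolding hint_def by simp
qed

lemma cvx_vint:
  assumes "convex_matrix m n B" "j < n" shows "cvx (vint m B j)"
  unfolding cvx_def
proof (intro allI impI)
  fix x y z assume h: "x \<in> vint m B j \<and> y \<in> vint m B j \<and> x \<le> z \<and> z \<le> y"
  have hx: "x < m" "B x j = 1" "y < m" "B y j = 1" using h unfolding vint_def by auto
  have "B z j = 1"
    using conjunct2[OF assms(1)[unfolded convex_matrix_def], rule_format, OF assms(2), of x z y] h hx by blast
  then show "z \<in> vint m B j" using h hx unfolding vint_def by simp
qed

lemma rows_gen:
  assumes conv: "convex_class R S" and A: "A \<in> classA R S"
    and i: "i < length R" "i' < length R" "i \<noteq> i'"
  shows "(card (hint (length S) A i) = 1 \<and> card (hint (length S) A i') = 1) \<or>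
       hint (length S) A i \<subseteq> hint (length S) A i' \<or> hint (length S) A i' \<subseteq> hint (length S) A i \<or>
       shift_pair (hint (length S) A i) (hint (length S) A i')"
proof (rule core)
  show "finite (hint (length S) A i)" "finite (hint (length S) A i')" unfolding hint_def by auto
  have cm: "convex_matrix (length R) (length S) A" using conv A unfolding convex_class_def by blast
  show "cvx (hint (length S) A i)" "cvx (hint (length S) A i')" using cvx_hint[OF cm] i by auto
  fix a d assume h: "a \<in> hint (length S) A i" "a \<notin> hint (length S) A i'"
    "d \<in> hint (length S) A i'" "d \<notin> hint (length S) A i"
  have zA: "zero_one_matrix (length R) (length S) A" using A unfolding classA_def by simp
  have ad: "a < length S" "d < length S" "a \<noteq> d" using h unfolding hint_def by auto
  have v: "A i a = 1" "A i d = 0" "A i' a = 0" "A i' d = 1"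
    using h ad zA i unfolding hint_def zero_one_matrix_def by auto
  have B: "sw A i i' a d \<in> classA R S" by (rule sw_classA) (use A i ad v in auto)
  have cB: "convex_matrix (length R) (length S) (sw A i i' a d)" using conv B unfolding convex_class_def by blast
  have e1: "hint (length S) (sw A i i' a d) i = hint (length S) A i - {a} \<union> {d}"
    using ad i unfolding hint_def sw_def by auto
  have e2: "hint (length S) (sw A i i' a d) i' = hint (length S) A i' - {d} \<union> {a}"
    using ad i unfolding hint_def sw_def by auto
  show "cvx (hint (length S) A i - {a} \<union> {d}) \<and> cvx (hint (length S) A i' - {d} \<union> {a})"
    using cvx_hint[OF cB, of i] cvx_hint[OF cB, of i'] e1 e2 i by simp
qed

lemma cols_gen:
  assumes conv: "convex_class R S" and A: "A \<in> classA R S"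
    and j: "j < length S" "j' < length S" "j \<noteq> j'"
  shows "(card (vint (length R) A j) = 1 \<and> card (vint (length R) A j') = 1) \<or>
       vint (length R) A j \<subseteq> vint (length R) A j' \<or> vint (length R) A j' \<subseteq> vint (length R) A j \<or>
       shift_pair (vint (length R) A j) (vint (length R) A j')"
proof (rule core)
  show "finite (vint (length R) A j)" "finite (vint (length R) A j')" unfolding vint_def by auto
  have cm: "convex_matrix (length R) (length S) A" using conv A unfolding convex_class_def by blast
  show "cvx (vint (length R) A j)" "cvx (vint (length R) A j')" using cvx_vint[OF cm] j by auto
  fix a d assume h: "a \<in> vint (length R) A j" "a \<notin> vint (length R) A j'"
    "d \<in> vint (length R) A j'" "d \<notin> vint (length R) A j"
  have zA: "zero_one_matrix (length R) (length S) A" using A unfolding classA_def by simp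
  have ad: "a < length R" "d < length R" "a \<noteq> d" using h unfolding vint_def by auto
  have v: "A a j = 1" "A a j' = 0" "A d j = 0" "A d j' = 1"
    using h ad zA j unfolding vint_def zero_one_matrix_def by auto
  have B: "sw A a d j j' \<in> classA R S" by (rule sw_classA) (use A j ad v in auto)
  have cB: "convex_matrix (length R) (length S) (sw A a d j j')" using conv B unfolding convex_class_def by blast
  have e1: "vint (length R) (sw A a d j j') j = vint (length R) A j - {a} \<union> {d}"
    using ad j unfolding vint_def sw_def by auto
  have e2: "vint (length R) (sw A a d j j') j' = vint (length R) A j' - {d} \<union> {a}"
    using ad j unfolding vint_def sw_def by auto
  show "cvx (vint (length R) A j - {a} \<union> {d}) \<and> cvx (vint (length R) A j' - {d} \<union> {a})"
    using cvx_vint[OF cB, of j] cvx_vint[OF cB, of j'] e1 e2 j by simp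
qed

lemma card_bound:
  assumes "finite I" "finite J"
    "(card I = 1 \<and> card J = 1) \<or> I \<subseteq> J \<or> J \<subseteq> I \<or> shift_pair I J"
    "k \<ge> 1" "card I = k" "card J \<ge> k + 1"
  shows "I \<subseteq> J"
proof -
  have n1: "\<not> J \<subseteq> I"
  proof
    assume "J \<subseteq> I"
    then have "card J \<le> card I" by (rule card_mono[OF assms(1)])
    then show False using assms(5,6) by linarith
  qed
  have n2: "\<not> shift_pair I J"
  proof
    assume "shift_pair I J"
    then obtain a b where "(I = {a..b} \<and> J = {a+1..b+1}) \<or> (J = {a..b} \<and> I = {a+1..b+1})"
      unfolding shift_pair_def by blast
    then have "card I = card J" by auto
    then show False using assms(5,6) by linarith
  qed
  have n3: "\<not> (card I = 1 \<and> card J = 1)" using assms(4,5,6) by linarith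
  show ?thesis using assms(3) n1 n2 n3 by blast
qed

theorem mainTheorem9:
  fixes R S :: "nat list" and A :: "nat \<Rightarrow> nat \<Rightarrow> nat"
  defines "m \<equiv> length R" and "n \<equiv> length S"
  assumes conv: "convex_class R S" and AinA: "A \<in> classA R S"
  shows
   "(\<forall>i<m. \<forall>i'<m. i \<noteq> i' \<longrightarrow>
       (card (hint n A i) = 1 \<and> card (hint n A i') = 1) \<or>
       hint n A i \<subseteq> hint n A i' \<or> hint n A i' \<subseteq> hint n A i \<or>
       shift_pair (hint n A i) (hint n A i'))
  \<and> (\<forall>i<m. \<forall>i'<m. \<forall>k. i \<noteq> i' \<and> k \<ge> 1 \<and> card (hint n A i) = k \<and> card (hint n A i') \<ge> k + 1
        \<longrightarrow> hint n A i \<subseteq> hint n A i')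
  \<and> (\<forall>j<n. \<forall>j'<n. j \<noteq> j' \<longrightarrow>
       (card (vint m A j) = 1 \<and> card (vint m A j') = 1) \<or>
       vint m A j \<subseteq> vint m A j' \<or> vint m A j' \<subseteq> vint m A j \<or>
       shift_pair (vint m A j) (vint m A j'))
  \<and> (\<forall>j<n. \<forall>j'<n. \<forall>k. j \<noteq> j' \<and> k \<ge> 1 \<and> card (vint m A j) = k \<and> card (vint m A j') \<ge> k + 1
        \<longrightarrow> vint m A j \<subseteq> vint m A j')
  \<and> (\<forall>B\<in>classA R S. \<forall>i i' j j'. i < i' \<and> i' < m \<and> j < j' \<and> j' < n \<and> interchange_at B i i' j j' \<longrightarrow>
        ((card (hint n B i) = 1 \<and> card (hint n B i') = 1) \<or> shift_pair (hint n B i) (hint n B i')) \<and>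
        ((card (vint m B j) = 1 \<and> card (vint m B j') = 1) \<or> shift_pair (vint m B j) (vint m B j')))"
  proof -
  have fh: "\<And>B i. finite (hint n B i)" unfolding hint_def by auto
  have fv: "\<And>B j. finite (vint m B j)" unfolding vint_def by auto
  have P1: "\<forall>i<m. \<forall>i'<m. i \<noteq> i' \<longrightarrow>
       (card (hint n A i) = 1 \<and> card (hint n A i') = 1) \<or>
       hint n A i \<subseteq> hint n A i' \<or> hint n A i' \<subseteq> hint n A i \<or>
       shift_pair (hint n A i) (hint n A i')"
    using rows_gen[OF conv AinA] unfolding m_def n_def by blast
  have P3: "\<forall>j<n. \<forall>j'<n. j \<noteq> j' \<longrightarrow>
       (card (vint m A j) = 1 \<and> card (vint m A j') = 1) \<or>
       vint m A j \<subseteq> vint m A j' \<or> vint m A j' \<subseteq> vint m A j \<or>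
       shift_pair (vint m A j) (vint m A j')"
    using cols_gen[OF conv AinA] unfolding m_def n_def by blast
  have P2: "\<forall>i<m. \<forall>i'<m. \<forall>k. i \<noteq> i' \<and> k \<ge> 1 \<and> card (hint n A i) = k \<and> card (hint n A i') \<ge> k + 1
        \<longrightarrow> hint n A i \<subseteq> hint n A i'"
  proof (intro allI impI)
    fix i i' k assume "i < m" "i' < m" and hk: "i \<noteq> i' \<and> k \<ge> 1 \<and> card (hint n A i) = k \<and> card (hint n A i') \<ge> k + 1"
    then show "hint n A i \<subseteq> hint n A i'"
      using card_bound[OF fh fh P1[rule_format, of i i']] by blast
  qed
  have P4: "\<forall>j<n. \<forall>j'<n. \<forall>k. j \<noteq> j' \<and> k \<ge> 1 \<and> card (vint m A j) = k \<and> card (vint m A j') \<ge> k + 1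
        \<longrightarrow> vint m A j \<subseteq> vint m A j'"
  proof (intro allI impI)
    fix j j' k assume "j < n" "j' < n" and hk: "j \<noteq> j' \<and> k \<ge> 1 \<and> card (vint m A j) = k \<and> card (vint m A j') \<ge> k + 1"
    then show "vint m A j \<subseteq> vint m A j'"
      using card_bound[OF fv fv P3[rule_format, of j j']] by blast
  qed
  have P5: "\<forall>B\<in>classA R S. \<forall>i i' j j'. i < i' \<and> i' < m \<and> j < j' \<and> j' < n \<and> interchange_at B i i' j j' \<longrightarrow>
        ((card (hint n B i) = 1 \<and> card (hint n B i') = 1) \<or> shift_pair (hint n B i) (hint n B i')) \<and>
        ((card (vint m B j) = 1 \<and> card (vint m B j') = 1) \<or> shift_pair (vint m B j) (vint m B j'))"
  proof (intro ballI allI impI)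
    fix B i i' j j'
    assume B: "B \<in> classA R S" and h: "i < i' \<and> i' < m \<and> j < j' \<and> j' < n \<and> interchange_at B i i' j j'"
    have r: "(card (hint n B i) = 1 \<and> card (hint n B i') = 1) \<or>
       hint n B i \<subseteq> hint n B i' \<or> hint n B i' \<subseteq> hint n B i \<or>
       shift_pair (hint n B i) (hint n B i')"
      using rows_gen[OF conv B, of i i'] h unfolding m_def n_def by auto
    have c: "(card (vint m B j) = 1 \<and> card (vint m B j') = 1) \<or>
       vint m B j \<subseteq> vint m B j' \<or> vint m B j' \<subseteq> vint m B j \<or>
       shift_pair (vint m B j) (vint m B j')"
      using cols_gen[OF conv B, of j j'] h unfolding m_def n_def by auto
    have nr: "\<not> hint n B i \<subseteq> hint n B i'" "\<not> hint n B i' \<subseteq> hint n B i"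
    proof -
      have jn: "j < n" "j' < n" "i < m" "i' < m" using h by auto
      have "(j \<in> hint n B i \<and> j \<notin> hint n B i' \<and> j' \<in> hint n B i' \<and> j' \<notin> hint n B i) \<or>
            (j' \<in> hint n B i \<and> j' \<notin> hint n B i' \<and> j \<in> hint n B i' \<and> j \<notin> hint n B i)"
        using h jn unfolding interchange_at_def hint_def by auto
      then have w: "\<exists>x. x \<in> hint n B i \<and> x \<notin> hint n B i'" "\<exists>x. x \<in> hint n B i' \<and> x \<notin> hint n B i"
        by blast+
      then show "\<not> hint n B i \<subseteq> hint n B i'" "\<not> hint n B i' \<subseteq> hint n B i" by blast+
    qed
    have nc: "\<not> vint m B j \<subseteq> vint m B j'" "\<not> vint m B j' \<subseteq> vint m B j"
    proof -
      have jn: "j < n" "j' < n" "i < m" "i' < m" using h by auto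
      have "(i \<in> vint m B j \<and> i \<notin> vint m B j' \<and> i' \<in> vint m B j' \<and> i' \<notin> vint m B j) \<or>
            (i' \<in> vint m B j \<and> i' \<notin> vint m B j' \<and> i \<in> vint m B j' \<and> i \<notin> vint m B j)"
        using h jn unfolding interchange_at_def vint_def by auto
      then have w: "\<exists>x. x \<in> vint m B j \<and> x \<notin> vint m B j'" "\<exists>x. x \<in> vint m B j' \<and> x \<notin> vint m B j"
        by blast+
      then show "\<not> vint m B j \<subseteq> vint m B j'" "\<not> vint m B j' \<subseteq> vint m B j" by blast+
    qed
    show "((card (hint n B i) = 1 \<and> card (hint n B i') = 1) \<or> shift_pair (hint n B i) (hint n B i')) \<and>
        ((card (vint m B j) = 1 \<and> card (vint m B j') = 1) \<or> shift_pair (vint m B j) (vint m B j'))"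
      using r c nr nc by blast
  qed
  show ?thesis by (intro conjI; fact P1 P2 P3 P4 P5)
qed

end
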